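(* Let $A=\{a_1<a_2<a_3<\cdots\}\subseteq\mathbb{N}$ be an infinite set with $\lambda(A)>1$. Then $\underline{\underline{d}}(A)=\underline{d}_\infty(A)=0$.
   Context: $\mathbb{N}=\{1,2,3,\dots\}$. For an infinite set $A=\{a_1<a_2<\cdots\}$, the gap density is $\lambda(A)=\limsup_{n\to\infty}\frac{a_{n+1}}{a_n}$. For $A\subseteq\mathbb{N}$ let $A(n)=|A\cap[1,n]|$; $\mathcal{D}$ is the collection of sets for which $d(A)=\lim_{n\to\infty}A(n)/n$ exists; $\underline{\underline{d}}(A)=\sup\{d(B);\ B\subseteq A,\ B\in\mathcal{D}\}$. For $\alpha\ge-1$ put $A_\alpha(n)=\sum_{k=1}^n\chi_A(k)k^\alpha$, $\mathbb{N}_\alpha(n)=\sum_{k=1}^nk^\alpha$, $\underline{d}_\alpha(A)=\liminf_{n\to\infty}\frac{A_\alpha(n)}{\mathbb{N}_\alpha(n)}$ and $\underline{d}_\infty(A)=\inf_{\alpha\ge-1}\underline{d}_\alpha(A)$. *)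

theory Defs
  imports "HOL-Analysis.Analysis" "HOL-Library.Liminf_Limsup"
begin

text \<open>Sets are subsets of nat; the paper's N = {1,2,...}, so we require 0 \<notin> A
  where relevant. The n-th element a_{n+1} of an infinite set A is enumerate A n
  (0-indexed).\<close>

definition gap_density :: "nat set \<Rightarrow> ereal" where
  "gap_density A = limsup (\<lambda>n. ereal (real (enumerate A (Suc n)) / real (enumerate A n)))"

definition counting :: "nat set \<Rightarrow> nat \<Rightarrow> nat" where
  "counting A n = card (A \<inter> {1..n})"

definition has_density :: "nat set \<Rightarrow> bool" where
  "has_density A \<longleftrightarrow> convergent (\<lambda>n. real (counting A n) / real n)"

definition density :: "nat set \<Rightarrow> real" where
  "density A = lim (\<lambda>n. real (counting A n) / real n)"

definition lower_lower_density :: "nat set \<Rightarrow> ereal" where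
  "lower_lower_density A = (SUP B\<in>{B. B \<subseteq> A \<and> has_density B}. ereal (density B))"

definition weighted_count :: "real \<Rightarrow> nat set \<Rightarrow> nat \<Rightarrow> real" where
  "weighted_count \<alpha> A n = (\<Sum>k\<in>A \<inter> {1..n}. real k powr \<alpha>)"

definition weighted_total :: "real \<Rightarrow> nat \<Rightarrow> real" where
  "weighted_total \<alpha> n = (\<Sum>k=1..n. real k powr \<alpha>)"

definition lower_alpha_density :: "real \<Rightarrow> nat set \<Rightarrow> ereal" where
  "lower_alpha_density \<alpha> A =
     liminf (\<lambda>n. ereal (weighted_count \<alpha> A n / weighted_total \<alpha> n))"

definition lower_infty_density :: "nat set \<Rightarrow> ereal" where
  "lower_infty_density A = (INF \<alpha>\<in>{-1..}. lower_alpha_density \<alpha> A)"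

end

theory Submission
  imports Defs
begin

lemma key_gap:
  fixes A :: "nat set"
  assumes "0 \<notin> A" and inf: "infinite A" and "gap_density A > 1"
  shows "\<exists>c'>1. \<forall>K. \<exists>n. K \<le> enumerate A n \<and> c' * real (enumerate A n) \<le> real (enumerate A (Suc n)) - 1"
proof -
  let ?a = "enumerate A"
  obtain c where c1: "1 < ereal c" and cg: "ereal c < gap_density A"
    using ereal_dense2[OF assms(3)] by (metis ereal_dense2 ereal_less_eq(3) ereal_less(1) less_ereal.simps(1) order.strict_trans)
  have c1': "1 < c" using c1 by simp
  have freq: "\<exists>\<^sub>F n in sequentially. ereal c < ereal (real (?a (Suc n)) / real (?a n))"
  proof (rule ccontr)
    assume "\<not> ?thesis"
    hence "\<forall>\<^sub>F n in sequentially. ereal (real (?a (Suc n)) / real (?a n)) \<le> ereal c"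
      by (simp add: not_frequently not_less)
    hence "gap_density A \<le> ereal c" unfolding gap_density_def
      by (intro Limsup_bounded) auto
    with cg show False by simp
  qed
  define c' where "c' = (1 + c) / 2"
  have "c' > 1" using c1' by (simp add: c'_def)
  moreover have "\<exists>n. K \<le> ?a n \<and> c' * real (?a n) \<le> real (?a (Suc n)) - 1" for K
  proof -
    define K' where "K' = max K (nat \<lceil>2 / (c - 1)\<rceil>)"
    have ev: "\<forall>\<^sub>F n in sequentially. K' \<le> ?a n"
      using eventually_ge_at_top[of K'] by eventually_elim (meson inf le_enumerate order_trans)
    obtain n where n1: "K' \<le> ?a n" and n2: "c < real (?a (Suc n)) / real (?a n)"
      using frequently_ex[OF frequently_eventually_conj[OF freq ev]] by auto
    have pos: "real (?a n) > 0" using enumerate_in_set[OF inf, of n] assms(1)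
      by (metis gr0I of_nat_0_less_iff)
    have "c * real (?a n) < real (?a (Suc n))" using n2 pos by (simp add: field_simps)
    moreover have "2 / (c - 1) \<le> real (?a n)"
      using n1 unfolding K'_def by linarith
    hence "1 \<le> (c - c') * real (?a n)" using c1' by (simp add: c'_def field_simps)
    ultimately have "c' * real (?a n) \<le> real (?a (Suc n)) - 1" by (simp add: algebra_simps)
    moreover have "K \<le> ?a n" using n1 by (simp add: K'_def)
    ultimately show ?thesis by blast
  qed
  ultimately show ?thesis by blast
qed

lemma key_MN:
  fixes A :: "nat set"
  assumes "0 \<notin> A" and inf: "infinite A" and "gap_density A > 1"
  shows "\<exists>c'>1. \<forall>K. \<exists>M N. K \<le> M \<and> 1 \<le> M \<and> M \<le> N \<and> c' * real M \<le> real N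
           \<and> A \<inter> {1..N} = A \<inter> {1..M}"
proof -
  let ?a = "enumerate A"
  obtain c' where c': "c' > 1" and H: "\<forall>K. \<exists>n. K \<le> ?a n \<and> c' * real (?a n) \<le> real (?a (Suc n)) - 1"
    using key_gap[OF assms] by blast
  have "\<exists>M N. K \<le> M \<and> 1 \<le> M \<and> M \<le> N \<and> c' * real M \<le> real N
           \<and> A \<inter> {1..N} = A \<inter> {1..M}" for K
  proof -
    obtain n where n1: "K \<le> ?a n" and n2: "c' * real (?a n) \<le> real (?a (Suc n)) - 1"
      using H by blast
    have pos: "1 \<le> ?a n" using enumerate_in_set[OF inf, of n] assms(1)
      by (metis less_one not_less)
    have step: "?a n < ?a (Suc n)" using enumerate_step[OF inf] .
    define N where "N = ?a (Suc n) - 1"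
    have rN: "real N = real (?a (Suc n)) - 1" using step unfolding N_def by (simp add: of_nat_diff)
    have MN: "?a n \<le> N" using step unfolding N_def by simp
    have "A \<inter> {1..N} = A \<inter> {1..?a n}"
    proof
      show "A \<inter> {1..N} \<subseteq> A \<inter> {1..?a n}"
      proof
        fix x assume x: "x \<in> A \<inter> {1..N}"
        then obtain k where k: "?a k = x" using enumerate_Ex[OF inf] by blast
        have "x < ?a (Suc n)" using x step unfolding N_def by auto
        hence "k < Suc n" using k enumerate_mono_iff[OF inf] by metis
        hence "x \<le> ?a n" using k enumerate_mono_le_iff[OF inf] by (metis less_Suc_eq_le)
        thus "x \<in> A \<inter> {1..?a n}" using x by auto
      qed
      show "A \<inter> {1..?a n} \<subseteq> A \<inter> {1..N}" using MN by auto
    qed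
    thus ?thesis using n1 pos MN n2 rN by (intro exI[of _ "?a n"] exI[of _ N]) auto
  qed
  thus ?thesis using c' by blast
qed

lemma total_shift:
  assumes "1 \<le> M" "M \<le> N" "(0::real) \<le> \<alpha>"
  shows "(real N / real M) powr \<alpha> * weighted_total \<alpha> M \<le> weighted_total \<alpha> N"
proof -
  define t where "t = N - M"
  have "(real N / real M) powr \<alpha> * weighted_total \<alpha> M
        = (\<Sum>k=1..M. (real N / real M * real k) powr \<alpha>)"
    unfolding weighted_total_def sum_distrib_left
    by (intro sum.cong refl) (simp add: powr_mult[symmetric])
  also have "\<dots> \<le> (\<Sum>k=1..M. real (k + t) powr \<alpha>)"
  proof (intro sum_mono powr_mono2)
    fix k assume k: "k \<in> {1..M}"
    show "0 \<le> \<alpha>" by fact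
    show "0 \<le> real N / real M * real k" by simp
    have "real N * real k \<le> real (k + t) * real M"
    proof -
      have "real N = real M + real t" using assms unfolding t_def by simp
      moreover have "real t * real k \<le> real t * real M" using k by (intro mult_left_mono) auto
      ultimately show ?thesis by (simp add: algebra_simps)
    qed
    thus "real N / real M * real k \<le> real (k + t)" using assms
      by (simp add: field_simps)
  qed
  also have "\<dots> = (\<Sum>j\<in>(\<lambda>k. k + t) ` {1..M}. real j powr \<alpha>)"
    by (subst sum.reindex) (auto simp: inj_on_def)
  also have "\<dots> \<le> weighted_total \<alpha> N"
    unfolding weighted_total_def
    using assms by (intro sum_mono2) (auto simp: t_def)
  finally show ?thesis .
qed

lemma wt_pos: "1 \<le> M \<Longrightarrow> weighted_total \<alpha> M > 0"
  unfolding weighted_total_def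
  by (rule sum_pos2[of _ 1]) auto

lemma ratio_bound:
  assumes "1 \<le> M" "M \<le> N" "(0::real) \<le> \<alpha>" "A \<inter> {1..N} = A \<inter> {1..M}"
  shows "weighted_count \<alpha> A N / weighted_total \<alpha> N \<le> (real M / real N) powr \<alpha>"
proof -
  have Npos: "real N > 0" "real M > 0" using assms by auto
  have wc: "weighted_count \<alpha> A N \<le> weighted_total \<alpha> M"
    unfolding weighted_count_def weighted_total_def assms(4)
    by (intro sum_mono2) auto
  have wM: "weighted_total \<alpha> M > 0" using wt_pos assms by blast
  have sh: "(real N / real M) powr \<alpha> * weighted_total \<alpha> M \<le> weighted_total \<alpha> N"
    using total_shift assms by blast
  have pp: "(real N / real M) powr \<alpha> > 0" using Npos by simp
  have inv: "(real M / real N) powr \<alpha> * (real N / real M) powr \<alpha> = 1"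
    using Npos by (simp add: powr_mult[symmetric])
  have "weighted_count \<alpha> A N / weighted_total \<alpha> N \<le> weighted_total \<alpha> M / ((real N / real M) powr \<alpha> * weighted_total \<alpha> M)"
    using wc sh pp wM by (intro frac_le) auto
  also have "\<dots> = (real M / real N) powr \<alpha>"
    using wM pp inv by (simp add: field_simps)
  finally show ?thesis .
qed

lemma density_zero:
  fixes A B :: "nat set"
  assumes c': "c' > 1"
    and H: "\<forall>K. \<exists>M N. K \<le> M \<and> 1 \<le> M \<and> M \<le> N \<and> c' * real M \<le> real N
           \<and> A \<inter> {1..N} = A \<inter> {1..M}"
    and BA: "B \<subseteq> A" and hd: "has_density B"
  shows "density B = 0"
proof -
  define f where "f n = real (counting B n) / real n" for n
  have lim: "f \<longlonglongrightarrow> density B"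
    using hd unfolding has_density_def density_def f_def by (simp add: convergent_LIMSEQ_iff)
  define d where "d = density B"
  have d0: "0 \<le> d" unfolding d_def
    by (rule LIMSEQ_le_const[OF lim]) (auto simp: f_def)
  have "\<not> d > 0"
  proof
    assume dp: "d > 0"
    define e where "e = d * (c' - 1) / (c' + 1)"
    have ep: "e > 0" using dp c' by (simp add: e_def)
    obtain K0 where K0: "\<And>n. n \<ge> K0 \<Longrightarrow> dist (f n) d < e"
      using lim[unfolded d_def[symmetric]] ep unfolding LIMSEQ_def by blast
    obtain M N where MN: "K0 \<le> M" "1 \<le> M" "M \<le> N" "c' * real M \<le> real N"
      "A \<inter> {1..N} = A \<inter> {1..M}" using H by blast
    have BNM: "B \<inter> {1..N} = B \<inter> {1..M}" using MN(5) BA by blast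
    have cnt: "counting B N = counting B M" unfolding counting_def BNM ..
    have fN: "d - e < f N" using K0[of N] MN by (auto simp: dist_real_def)
    have fM: "f M < d + e" using K0[of M] MN by (auto simp: dist_real_def)
    have Mp: "real M > 0" using MN by simp
    have "f N * real N = f M * real M" unfolding f_def cnt using MN by simp
    hence "f N * (c' * real M) \<le> f M * real M"
      using MN(4) by (metis f_def div_0 divide_nonneg_nonneg mult_left_mono of_nat_0_le_iff order_trans le_refl)
    hence "f N * c' \<le> f M" using Mp by (simp add: mult.assoc[symmetric])
    hence "(d - e) * c' < d + e" using fN fM c' by (smt (verit) mult_strict_right_mono)
    moreover have "(d - e) * c' = d + e" unfolding e_def using c' by (simp add: field_simps)
    ultimately show False by simp
  qed
  thus ?thesis using d0 d_def by simp
qed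

lemma alpha_small:
  fixes A :: "nat set"
  assumes c': "c' > 1"
    and H: "\<forall>K. \<exists>M N. K \<le> M \<and> 1 \<le> M \<and> M \<le> N \<and> c' * real M \<le> real N
           \<and> A \<inter> {1..N} = A \<inter> {1..M}"
    and e: "e > 0"
  shows "lower_infty_density A \<le> ereal e"
proof -
  obtain m where m: "(1 / c') ^ m < e" using real_arch_pow_inv[OF e, of "1/c'"] c' by auto
  have "lower_alpha_density (real m) A \<le> ereal e"
    unfolding lower_alpha_density_def liminf_SUP_INF
  proof (rule SUP_least)
    fix K :: nat
    obtain M N where MN: "K \<le> M" "1 \<le> M" "M \<le> N" "c' * real M \<le> real N"
      "A \<inter> {1..N} = A \<inter> {1..M}" using H by blast
    have "weighted_count (real m) A N / weighted_total (real m) N \<le> (real M / real N) powr real m"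
      using ratio_bound[OF MN(2,3) _ MN(5)] by simp
    also have "\<dots> = (real M / real N) ^ m" using MN by (simp add: powr_realpow)
    also have "\<dots> \<le> (1 / c') ^ m"
    proof (rule power_mono)
      show "real M / real N \<le> 1 / c'" using MN c' by (simp add: field_simps)
    qed simp
    finally have "ereal (weighted_count (real m) A N / weighted_total (real m) N) \<le> ereal e"
      using m by simp
    thus "(INF n\<in>{K..}. ereal (weighted_count (real m) A n / weighted_total (real m) n)) \<le> ereal e"
      using MN by (intro INF_lower2[of N]) auto
  qed
  thus ?thesis unfolding lower_infty_density_def
    by (intro INF_lower2[of "real m"]) auto
qed

theorem proposition4p6:
  fixes A :: "nat set"
  assumes "0 \<notin> A" and "infinite A" and "gap_density A > 1"
  shows "lower_lower_density A = 0 \<and> lower_infty_density A = 0"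
proof
  obtain c' where c': "c' > 1" and H: "\<forall>K. \<exists>M N. K \<le> M \<and> 1 \<le> M \<and> M \<le> N \<and> c' * real M \<le> real N
           \<and> A \<inter> {1..N} = A \<inter> {1..M}"
    using key_MN[OF assms] by blast
  have e: "has_density {}" unfolding has_density_def counting_def by (simp add: convergent_const)
  have "(\<lambda>B. ereal (density B)) ` {B. B \<subseteq> A \<and> has_density B} = {0}"
    using density_zero[OF c' H] e by force
  thus "lower_lower_density A = 0" unfolding lower_lower_density_def by simp
  have ge: "0 \<le> lower_infty_density A"
    unfolding lower_infty_density_def lower_alpha_density_def
  proof (rule INF_greatest)
    fix \<alpha> :: real
    show "0 \<le> liminf (\<lambda>n. ereal (weighted_count \<alpha> A n / weighted_total \<alpha> n))"
      by (intro Liminf_bounded always_eventually allI)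
        (auto simp: weighted_count_def weighted_total_def intro!: divide_nonneg_nonneg sum_nonneg)
  qed
  have "lower_infty_density A \<le> 0"
    by (rule ereal_le_epsilon2) (use alpha_small[OF c' H] in auto)
  thus "lower_infty_density A = 0" using ge by simp
qed

end
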